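(* Let $\mathcal{P}_1=\{f\in\mathcal{P}:\sum_{k=1}^n|\hat{f}_k|\le 1\}$. Then $\mathcal{P}_1$ is convex and compact, its extreme points are exactly $\mathbb{0},u_1,\dots,u_n$ (where $\mathbb{0}$ is the zero signal), and $$\mathcal{P}_1=\mathrm{conv}\{\mathbb{0},u_1,\dots,u_n\}.$$
   Context: Let $G$ be a graph with vertices $v_1,\dots,v_n$, symmetric non-negative weighted adjacency matrix $\mathbf{A}$, degree matrix $\mathbf{D}=\mathrm{diag}(\sum_k\mathbf{A}_{ik})$ (positive), and normalized Laplacian $\mathbf{L}=\mathbf{I}_n-\mathbf{D}^{-1/2}\mathbf{A}\mathbf{D}^{-1/2}$. Signals are vectors in $\mathcal{L}(G)\cong\mathbb{R}^n$ with standard basis $e_1,\dots,e_n$. Fix an orthonormal eigendecomposition $\mathbf{L}=\mathbf{U}\,\mathrm{diag}(\lambda_1,\dots,\lambda_n)\mathbf{U}^\intercal$ with columns $u_1,\dots,u_n$. Fourier transform $\hat{x}=\mathbf{U}^\intercal x$; convolution operator $\mathbf{C}_x=\mathbf{U}\,\mathrm{diag}(\hat{x})\mathbf{U}^\intercal$. For $f\in\mathcal{L}(G)$ let $(\mathbf{K}_f)_{ij}=(\mathbf{C}_{e_j}f)(v_i)$; $f$ is positive semi-definite if $\mathbf{K}_f$ is symmetric positive semi-definite. $\mathcal{P}$ denotes the set of positive semi-definite functions. *)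

theory Defs
  imports "HOL-Analysis.Analysis"
begin

text \<open>Vertices are indexed by a finite type 'n (so n = CARD('n)); signals are real^'n,
 matrices are real^'n^'n.\<close>

definition diag_mat :: "real^'n \<Rightarrow> real^'n^'n" where
  "diag_mat d = (\<chi> i j. if i = j then d $ i else 0)"

definition degree_vec :: "real^'n^'n \<Rightarrow> real^'n" where
  "degree_vec A = (\<chi> i. \<Sum>k\<in>UNIV. A $ i $ k)"

definition normalized_laplacian :: "real^'n^'n \<Rightarrow> real^'n^'n" where
  "normalized_laplacian A =
     mat 1 - diag_mat (\<chi> i. 1 / sqrt (degree_vec A $ i)) ** A
             ** diag_mat (\<chi> i. 1 / sqrt (degree_vec A $ i))"

definition gft :: "real^'n^'n \<Rightarrow> real^'n \<Rightarrow> real^'n" where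
  "gft U x = transpose U *v x"

definition conv_op :: "real^'n^'n \<Rightarrow> real^'n \<Rightarrow> real^'n^'n" where
  "conv_op U x = U ** diag_mat (gft U x) ** transpose U"

definition kernel_mat :: "real^'n^'n \<Rightarrow> real^'n \<Rightarrow> real^'n^'n" where
  "kernel_mat U f = (\<chi> i j. (conv_op U (axis j 1) *v f) $ i)"

definition psd_matrix :: "real^'n^'n \<Rightarrow> bool" where
  "psd_matrix K \<longleftrightarrow> transpose K = K \<and> (\<forall>x. 0 \<le> x \<bullet> (K *v x))"

definition psd_functions :: "real^'n^'n \<Rightarrow> (real^'n) set" where
  "psd_functions U = {f. psd_matrix (kernel_mat U f)}"

definition P1 :: "real^'n^'n \<Rightarrow> (real^'n) set" where
  "P1 U = {f \<in> psd_functions U. (\<Sum>k\<in>UNIV. \<bar>gft U f $ k\<bar>) \<le> 1}"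

end

theory Submission
  imports Defs
begin

lemma kernel_eq: "kernel_mat U f = U ** diag_mat (gft U f) ** transpose U"
  unfolding kernel_mat_def conv_op_def
  apply (simp add: vec_eq_iff matrix_matrix_mult_def matrix_vector_mult_def diag_mat_def gft_def transpose_def axis_def
      if_distrib[of "\<lambda>x. _ * x"] cong: if_cong)
  apply (simp add: sum_distrib_left sum_distrib_right mult_ac)
  apply (subst sum.swap) apply (simp add: mult_ac)
  done

lemma transpose_diag: "transpose (diag_mat d) = diag_mat d"
  by (simp add: vec_eq_iff transpose_def diag_mat_def)

lemma diag_quad: "y \<bullet> (diag_mat d *v y) = (\<Sum>k\<in>UNIV. d$k * (y$k)^2)"
  by (simp add: inner_vec_def matrix_vector_mult_def diag_mat_def if_distrib[of "\<lambda>x. x * _"] if_distrib[of "\<lambda>x. _ * x"] power2_eq_square mult_ac cong: if_cong)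

lemma psd_iff:
  assumes U: "orthogonal_matrix U"
  shows "psd_matrix (U ** diag_mat d ** transpose U) \<longleftrightarrow> (\<forall>k. 0 \<le> d$k)"
proof -
  have UU: "transpose U ** U = mat 1" "U ** transpose U = mat 1" using U by (auto simp: orthogonal_matrix_def)
  have sym: "transpose (U ** diag_mat d ** transpose U) = U ** diag_mat d ** transpose U"
    by (simp add: matrix_transpose_mul transpose_diag matrix_mul_assoc)
  have q: "x \<bullet> ((U ** diag_mat d ** transpose U) *v x) = (transpose U *v x) \<bullet> (diag_mat d *v (transpose U *v x))" for x
    by (simp add: matrix_vector_mul_assoc[symmetric] dot_lmul_matrix[symmetric])
  show ?thesis
  proof
    assume "psd_matrix (U ** diag_mat d ** transpose U)"
    then have h: "0 \<le> x \<bullet> ((U ** diag_mat d ** transpose U) *v x)" for x by (simp add: psd_matrix_def)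
    show "\<forall>k. 0 \<le> d$k"
    proof
      fix k
      have e: "transpose U *v (U *v axis k 1) = axis k 1"
        by (simp only: matrix_vector_mul_assoc UU matrix_vector_mul_lid)
      have "0 \<le> (transpose U *v (U *v axis k 1)) \<bullet> (diag_mat d *v (transpose U *v (U *v axis k 1)))"
        using h[of "U *v axis k 1"] q[of "U *v axis k 1"] by linarith
      then have "0 \<le> axis k 1 \<bullet> (diag_mat d *v axis k (1::real))" unfolding e .
      then show "0 \<le> d$k" by (simp add: diag_quad axis_def if_distrib[of "\<lambda>x. x^2"] if_distrib[of "\<lambda>x. _ * x"] cong: if_cong)
    qed
  next
    assume "\<forall>k. 0 \<le> d$k"
    then show "psd_matrix (U ** diag_mat d ** transpose U)"
      unfolding psd_matrix_def using sym q by (auto simp: diag_quad intro!: sum_nonneg)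
  qed
qed

lemma P1_char:
  assumes U: "orthogonal_matrix U"
  shows "P1 U = {f. (\<forall>k. 0 \<le> gft U f $ k) \<and> (\<Sum>k\<in>UNIV. gft U f $ k) \<le> 1}"
proof -
  have "f \<in> psd_functions U \<longleftrightarrow> (\<forall>k. 0 \<le> gft U f $ k)" for f
    by (simp add: psd_functions_def kernel_eq psd_iff[OF U])
  then show ?thesis unfolding P1_def by auto
qed

lemma main:
  fixes U :: "real^'n^'n"
  assumes U: "orthogonal_matrix U"
  shows "convex (P1 U) \<and> compact (P1 U)
    \<and> {x. x extreme_point_of (P1 U)} = insert 0 {column k U | k. True}
    \<and> P1 U = convex hull (insert 0 {column k U | k. True})"
proof -
  define C where "C = {column k U | k. True}"
  have Crange: "C = range (\<lambda>k. column k U)" unfolding C_def by auto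
  have UU: "transpose U ** U = mat 1" "U ** transpose U = mat 1" using U by (auto simp: orthogonal_matrix_def)
  have cols: "\<And>i. norm (column i U) = 1" "\<And>i j. i \<noteq> j \<Longrightarrow> orthogonal (column i U) (column j U)"
    using U by (auto simp: orthogonal_matrix_orthonormal_columns)
  have inj: "inj (\<lambda>k. column k U)"
  proof (rule injI)
    fix i j assume e: "column i U = column j U"
    show "i = j"
    proof (rule ccontr)
      assume "i \<noteq> j"
      then have "column i U \<bullet> column j U = 0" using cols(2) by (simp add: orthogonal_def)
      moreover have "column i U \<bullet> column i U = 1" using cols(1)[of i] by (simp add: norm_eq_1)
      ultimately show False using e by simp
    qed
  qed
  have fin: "finite C" unfolding Crange by simp
  have C0: "0 \<notin> C" unfolding Crange using cols(1) by (metis imageE norm_zero zero_neq_one)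
  have g1: "gft U (U *v v) = v" for v
    unfolding gft_def by (simp only: matrix_vector_mul_assoc UU matrix_vector_mul_lid)
  have g2: "U *v gft U f = f" for f
    unfolding gft_def by (simp only: matrix_vector_mul_assoc UU matrix_vector_mul_lid)
  have sumC: "sum g C = (\<Sum>k\<in>UNIV. g (column k U))" for g :: "real^'n \<Rightarrow> real"
    unfolding Crange by (simp add: sum.reindex[OF inj])
  have sumCv: "(\<Sum>x\<in>C. u x *\<^sub>R x) = U *v (\<chi> k. u (column k U))" for u
    unfolding Crange by (simp add: sum.reindex[OF inj] matrix_mult_sum scalar_mult_eq_scaleR)
  have hull: "convex hull (insert 0 C) = {y. \<exists>u. (\<forall>x\<in>C. 0 \<le> u x) \<and> sum u C \<le> 1 \<and> (\<Sum>x\<in>C. u x *\<^sub>R x) = y}"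
    by (rule Starlike.simplex[OF fin C0])
  have eq: "P1 U = convex hull (insert 0 C)"
  proof
    show "P1 U \<subseteq> convex hull (insert 0 C)"
    proof
      fix f assume "f \<in> P1 U"
      then have f: "\<forall>k. 0 \<le> gft U f $ k" "(\<Sum>k\<in>UNIV. gft U f $ k) \<le> 1" by (auto simp: P1_char[OF U])
      define u where "u x = gft U f $ (inv (\<lambda>k. column k U) x)" for x
      have uc: "u (column k U) = gft U f $ k" for k unfolding u_def using inv_f_f[OF inj] by simp
      have ch: "(\<chi> k. u (column k U)) = gft U f" by (simp add: uc vec_eq_iff)
      have "\<forall>x\<in>C. 0 \<le> u x" using f by (auto simp: uc Crange)
      moreover have "sum u C \<le> 1" using f by (simp add: sumC uc)
      moreover have "(\<Sum>x\<in>C. u x *\<^sub>R x) = f" by (simp add: sumCv ch g2)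
      ultimately have "(\<forall>x\<in>C. 0 \<le> u x) \<and> sum u C \<le> 1 \<and> (\<Sum>x\<in>C. u x *\<^sub>R x) = f" by blast
      then show "f \<in> convex hull (insert 0 C)" unfolding hull by blast
    qed
  next
    show "convex hull (insert 0 C) \<subseteq> P1 U"
    proof
      fix f assume "f \<in> convex hull (insert 0 C)"
      then obtain u where u: "\<forall>x\<in>C. 0 \<le> u x" "sum u C \<le> 1" "(\<Sum>x\<in>C. u x *\<^sub>R x) = f" unfolding hull by blast
      have gf: "gft U f = (\<chi> k. u (column k U))" using u(3) by (simp add: sumCv g1 flip: u(3))
      have "(\<Sum>k\<in>UNIV. u (column k U)) \<le> 1" using u(2) by (simp add: sumC)
      then show "f \<in> P1 U" using u(1) unfolding P1_char[OF U] by (auto simp: gf Crange)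
    qed
  qed
  have po: "pairwise orthogonal C" unfolding Crange pairwise_def
  proof (clarify)
    fix i j assume "column i U \<noteq> column j U"
    then have "i \<noteq> j" by blast
    then show "orthogonal (column i U) (column j U)" by (rule cols(2))
  qed
  have ind: "\<not> dependent C" using pairwise_orthogonal_independent[OF po C0] by simp
  have aind: "\<not> affine_dependent (insert 0 C)"
    using affine_dependent_iff_dependent[OF C0] ind by simp
  show ?thesis unfolding C_def[symmetric] eq
    using extreme_point_of_convex_hull_affine_independent[OF aind]
    by (auto simp: convex_convex_hull finite_imp_compact_convex_hull fin)
qed

theorem theorem2:
  fixes A U :: "real^'n^'n" and lam :: "real^'n"
  assumes A_sym: "transpose A = A"
    and A_nonneg: "\<forall>i j. 0 \<le> A $ i $ j"
    and deg_pos: "\<forall>i. 0 < degree_vec A $ i"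
    and U_orth: "orthogonal_matrix U"
    and eig: "normalized_laplacian A = U ** diag_mat lam ** transpose U"
  shows "convex (P1 U) \<and> compact (P1 U)
    \<and> {x. x extreme_point_of (P1 U)} = insert 0 {column k U | k. True}
    \<and> P1 U = convex hull (insert 0 {column k U | k. True})"
  by (rule main[OF U_orth])

end
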